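(* Consider the directed linear network with nodes indexed by $\mathbb{Z}$ and an ideal (lossless) channel in which node $k$ can only transmit to node $k+1$. Let $\{p_i\}_{i\ge 0}$ be a probability distribution on $\{0,1,2,\dots\}$ and suppose that, at every time slot $n$, every node $k$ independently (of all other nodes and all other time slots) broadcasts its current information about node $k-i$ with probability $p_i$. The ages evolve by $A_{j,j}(n)=0$ and, for $j\neq l$, $A_{j,l}(n+1)=\min\{A_{j,l}(n),\,A_{j-1,l}(n)\}+1$ if node $j-1$ broadcast its information about node $l$ at time $n$, and $A_{j,l}(n+1)=A_{j,l}(n)+1$ otherwise. Fix $i\ge 1$ and assume $p_0,\dots,p_{i-1}>0$. Then, for every $k$ and every finite initial configuration of ages, $A_{k+i,k}(n)$ converges in distribution as $n\to\infty$ to $A_i:=G_0+G_1+\dots+G_{i-1}$, where $G_0,\dots,G_{i-1}$ are independent and $G_j$ is geometric on $\{1,2,\dots\}$ with success probability $p_j$ (i.e. $\mathbb{P}(G_j=m)=p_j(1-p_j)^{m-1}$). In particular $$\mathbb{E}[A_i]=\sum_{j=0}^{i-1}\frac{1}{p_j},\qquad \mathrm{Var}(A_i)=\sum_{j=0}^{i-1}\frac{1-p_j}{p_j^2}.$$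
   Context: $A_{j,l}(n)$ denotes the age of information at node $j$ about node $l$ at time $n$: the difference between $n$ and the time stamp of the most recent sensor measurement of node $l$ that has reached node $j$ (possibly via relays). Time is slotted, $n=0,1,2,\dots$. *)

theory Defs
  imports "HOL-Probability.Probability"
begin

text \<open>Broadcast decisions: B n k = i means that at time slot n node k broadcasts
its current information about node k - i.\<close>

primrec age :: "(int \<Rightarrow> int \<Rightarrow> nat) \<Rightarrow> (nat \<Rightarrow> int \<Rightarrow> nat) \<Rightarrow> nat \<Rightarrow> int \<Rightarrow> int \<Rightarrow> nat" where
  "age A0 B 0 j l = (if j = l then 0 else A0 j l)"
| "age A0 B (Suc n) j l =
     (if j = l then 0
      else if int (B n (j - 1)) = (j - 1) - l
           then min (age A0 B n j l) (age A0 B n (j - 1) l) + 1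
           else age A0 B n j l + 1)"

definition geom1_pmf :: "real \<Rightarrow> nat pmf" where
  "geom1_pmf q = map_pmf Suc (geometric_pmf q)"

primrec sum_geom_pmf :: "nat pmf \<Rightarrow> nat \<Rightarrow> nat pmf" where
  "sum_geom_pmf p 0 = return_pmf 0"
| "sum_geom_pmf p (Suc m) =
     bind_pmf (sum_geom_pmf p m) (\<lambda>a. map_pmf (\<lambda>g. a + g) (geom1_pmf (pmf p m)))"

end

theory Submission
  imports Defs
begin



lemma pmf_geom1:
  assumes "0 < q" "q \<le> 1"
  shows "pmf (map_pmf (\<lambda>g. a + g) (geom1_pmf q)) b = (if a < b then (1-q)^(b-1-a) * q else 0)"
proof (cases "a < b")
  case True
  have "map_pmf (\<lambda>g. a + g) (geom1_pmf q) = map_pmf (\<lambda>g. a + Suc g) (geometric_pmf q)"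
    by (simp add: geom1_pmf_def pmf.map_comp o_def)
  moreover have "b = (\<lambda>g. a + Suc g) (b-1-a)" using True by simp
  moreover have "inj (\<lambda>g. a + Suc g)" by (auto simp: inj_def)
  ultimately show ?thesis using True assms
    by (metis pmf_map_inj' pmf_geometric)
next
  case False
  have "map_pmf (\<lambda>g. a + g) (geom1_pmf q) = map_pmf (\<lambda>g. a + Suc g) (geometric_pmf q)"
    by (simp add: geom1_pmf_def pmf.map_comp o_def)
  moreover have "b \<notin> (\<lambda>g. a + Suc g) ` set_pmf (geometric_pmf q)" using False by auto
  ultimately show ?thesis using False by (simp add: pmf_map_outside)
qed

definition hq :: "nat pmf \<Rightarrow> nat \<Rightarrow> real" where "hq p j = pmf p j"

lemma h_Suc:
  assumes "0 < pmf p x"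
  shows "pmf (sum_geom_pmf p (Suc x)) b = (\<Sum>a<b. (1 - pmf p x)^(b-1-a) * pmf p x * pmf (sum_geom_pmf p x) a)"
proof -
  have q1: "pmf p x \<le> 1" by (rule pmf_le_1)
  have "pmf (sum_geom_pmf p (Suc x)) b = (\<integral>a. pmf (map_pmf (\<lambda>g. a + g) (geom1_pmf (pmf p x))) b \<partial>measure_pmf (sum_geom_pmf p x))"
    by (simp add: pmf_bind)
  also have "\<dots> = (\<integral>a. (if a < b then (1 - pmf p x)^(b-1-a) * pmf p x else 0) \<partial>measure_pmf (sum_geom_pmf p x))"
    using assms q1 by (simp add: pmf_geom1)
  also have "\<dots> = (\<Sum>a<b. (if a < b then (1 - pmf p x)^(b-1-a) * pmf p x else 0) * pmf (sum_geom_pmf p x) a)"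
    by (rule integral_measure_pmf_real) (auto split: if_splits)
  also have "\<dots> = (\<Sum>a<b. (1 - pmf p x)^(b-1-a) * pmf p x * pmf (sum_geom_pmf p x) a)"
    by (rule sum.cong) auto
  finally show ?thesis .
qed

lemma h_rec:
  assumes "0 < pmf p x"
  shows "pmf (sum_geom_pmf p (Suc x)) (Suc b) =
     pmf p x * pmf (sum_geom_pmf p x) b + (1 - pmf p x) * pmf (sum_geom_pmf p (Suc x)) b"
proof -
  let ?q = "pmf p x" and ?h = "pmf (sum_geom_pmf p x)"
  have "pmf (sum_geom_pmf p (Suc x)) (Suc b) = (\<Sum>a<Suc b. (1 - ?q)^(Suc b-1-a) * ?q * ?h a)"
    by (rule h_Suc[OF assms])
  also have "\<dots> = ?q * ?h b + (\<Sum>a<b. (1 - ?q)^(b-a) * ?q * ?h a)"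
    by simp
  also have "(\<Sum>a<b. (1 - ?q)^(b-a) * ?q * ?h a) = (1 - ?q) * (\<Sum>a<b. (1 - ?q)^(b-1-a) * ?q * ?h a)"
    unfolding sum_distrib_left
  proof (rule sum.cong)
    fix a assume "a \<in> {..<b}"
    then have "b - a = Suc (b-1-a)" by auto
    then show "(1 - ?q)^(b-a) * ?q * ?h a = (1 - ?q) * ((1 - ?q)^(b-1-a) * ?q * ?h a)" by simp
  qed simp
  also have "(\<Sum>a<b. (1 - ?q)^(b-1-a) * ?q * ?h a) = pmf (sum_geom_pmf p (Suc x)) b"
    by (rule h_Suc[OF assms, symmetric])
  finally show ?thesis .
qed

lemma h_Suc_0: "0 < pmf p x \<Longrightarrow> pmf (sum_geom_pmf p (Suc x)) 0 = 0"
  by (subst h_Suc) auto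

definition Cg :: "nat pmf \<Rightarrow> nat \<Rightarrow> nat \<Rightarrow> real" where
  "Cg p x t = (\<Sum>b\<le>t. pmf (sum_geom_pmf p x) b)"

lemma Cg_0: "Cg p 0 t = 1"
  unfolding Cg_def by (simp add: indicator_def)

lemma Cg_Suc_0: "0 < pmf p x \<Longrightarrow> Cg p (Suc x) 0 = 0"
  unfolding Cg_def by (simp add: h_Suc_0 del: sum_geom_pmf.simps)

lemma Cg_rec:
  assumes "0 < pmf p x"
  shows "Cg p (Suc x) (Suc t) = (1 - pmf p x) * Cg p (Suc x) t + pmf p x * Cg p x t"
proof -
  have "Cg p (Suc x) (Suc t) = pmf (sum_geom_pmf p (Suc x)) 0 + (\<Sum>b\<le>t. pmf (sum_geom_pmf p (Suc x)) (Suc b))"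
    unfolding Cg_def by (rule sum.atMost_Suc_shift)
  also have "\<dots> = (\<Sum>b\<le>t. pmf p x * pmf (sum_geom_pmf p x) b + (1 - pmf p x) * pmf (sum_geom_pmf p (Suc x)) b)"
    using assms by (simp add: h_Suc_0 h_rec del: sum_geom_pmf.simps)
  also have "\<dots> = (1 - pmf p x) * Cg p (Suc x) t + pmf p x * Cg p x t"
    unfolding Cg_def by (simp add: sum.distrib sum_distrib_left)
  finally show ?thesis .
qed

lemma Cg_prob: "measure_pmf.prob (sum_geom_pmf p x) {..t} = Cg p x t"
  unfolding Cg_def by (simp add: measure_measure_pmf_finite)




primrec Rf :: "(nat \<Rightarrow> int \<Rightarrow> nat) \<Rightarrow> int \<Rightarrow> nat \<Rightarrow> nat \<Rightarrow> int \<Rightarrow> bool" where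
  "Rf C l a 0 j = (j = l)"
| "Rf C l a (Suc t) j = (j = l \<or> Rf C l a t j \<or> (int (C (a+t) (j-1)) = j-1-l \<and> Rf C l a t (j-1)))"

lemma age_Rf: "1 \<le> a \<Longrightarrow> (age A0 C (a+t) j l \<le> t) = Rf C l a t j"
proof (induction t arbitrary: j)
  case 0
  then obtain a' where "a = Suc a'" by (cases a) auto
  then show ?case by simp
next
  case (Suc t)
  have e: "a + Suc t = Suc (a + t)" by simp
  show ?case unfolding e using Suc.IH[OF Suc.prems, of j] Suc.IH[OF Suc.prems, of "j-1"]
    by (auto simp del: age.simps(1) simp add: age.simps(2))
qed

lemma Rf_mono: "Rf C l a t (j+1) \<Longrightarrow> l \<le> j \<Longrightarrow> Rf C l a t j"
proof (induction t arbitrary: j)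
  case 0
  then show ?case by simp
next
  case (Suc t)
  then show ?case by auto
qed




lemma meas_pair_count:
  fixes X :: "'a \<Rightarrow> 'b::countable" and Y :: "'a \<Rightarrow> 'c::countable"
  assumes "X \<in> measurable M (count_space UNIV)" "Y \<in> measurable M (count_space UNIV)"
  shows "(\<lambda>w. (X w, Y w)) \<in> measurable M (count_space UNIV)"
proof -
  have "(\<lambda>w. (X w, Y w)) \<in> measurable M (count_space UNIV \<Otimes>\<^sub>M count_space UNIV)"
    using assms by (rule measurable_Pair)
  also have "count_space UNIV \<Otimes>\<^sub>M count_space UNIV = count_space (UNIV :: ('b \<times> 'c) set)"
    by (subst pair_measure_countable) auto
  finally show ?thesis .
qed

lemma age_meas:
  assumes Bm: "\<And>n j. B n j \<in> measurable M (count_space UNIV)"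
  shows "(\<lambda>\<omega>. age A0 (\<lambda>t x. B t x \<omega>) n j l) \<in> measurable M (count_space UNIV)"
proof (induction n arbitrary: j)
  case 0
  then show ?case by simp
next
  case (Suc n)
  define f where "f = (\<lambda>(u::nat,v::nat,b::nat). if j = l then 0 else if int b = j-1-l then min u v + 1 else u+1)"
  have "(\<lambda>\<omega>. age A0 (\<lambda>t x. B t x \<omega>) (Suc n) j l) = f \<circ> (\<lambda>\<omega>. (age A0 (\<lambda>t x. B t x \<omega>) n j l, age A0 (\<lambda>t x. B t x \<omega>) n (j-1) l, B n (j-1) \<omega>))"
    by (auto simp: f_def fun_eq_iff)
  also have "\<dots> \<in> measurable M (count_space UNIV)"
    by (rule measurable_comp[OF meas_pair_count[OF Suc.IH meas_pair_count[OF Suc.IH Bm]]]) simp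
  finally show ?case .
qed




context
  fixes M :: "'a measure" and p :: "nat pmf" and B :: "nat \<Rightarrow> int \<Rightarrow> 'a \<Rightarrow> nat"
  assumes PS: "prob_space M"
    and Bm: "\<And>n j. B n j \<in> measurable M (count_space UNIV)"
    and IND: "prob_space.indep_vars M (\<lambda>_. count_space UNIV) (\<lambda>(n, j). B n j) UNIV"
    and Bd: "\<And>n j. distr M (count_space UNIV) (B n j) = measure_pmf p"
begin

interpretation prob_space M by (rule PS)

definition Ev :: "nat \<times> int \<Rightarrow> 'a set set" where
  "Ev i = {(\<lambda>(n, j). B n j) i -` A \<inter> space M | A. A \<in> sets (count_space UNIV)}"

definition Sig :: "nat \<Rightarrow> 'a set set" where
  "Sig T = sigma_sets (space M) (\<Union>i\<in>{(s,y). s < T}. Ev i)"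

definition Rs :: "nat \<Rightarrow> int \<Rightarrow> nat \<Rightarrow> int \<Rightarrow> 'a set" where
  "Rs a l t j = {\<omega> \<in> space M. Rf (\<lambda>t x. B t x \<omega>) l a t j}"

lemma Sig_alg: "sigma_algebra (space M) (Sig T)"
  unfolding Sig_def
  by (rule sigma_algebra_sigma_sets) (auto simp: Ev_def)

lemma Bset_Ev: "{\<omega>\<in>space M. P (B s y \<omega>)} \<in> Ev (s,y)"
  unfolding Ev_def by (auto intro!: exI[of _ "{v. P v}"])

lemma Rs_in: "a + t \<le> T \<Longrightarrow> Rs a l t j \<in> Sig T"
proof (induction t arbitrary: j)
  case 0
  interpret S: sigma_algebra "space M" "Sig T" by (rule Sig_alg)
  show ?case by (cases "j = l") (auto simp: Rs_def)
next
  case (Suc t)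
  interpret S: sigma_algebra "space M" "Sig T" by (rule Sig_alg)
  have e: "Rs a l (Suc t) j = (if j = l then space M else
      Rs a l t j \<union> ({\<omega>\<in>space M. int (B (a+t) (j-1) \<omega>) = j-1-l} \<inter> Rs a l t (j-1)))"
    by (auto simp: Rs_def)
  have "{\<omega>\<in>space M. int (B (a+t) (j-1) \<omega>) = j-1-l} \<in> Sig T"
    unfolding Sig_def
    apply (rule sigma_sets.Basic)
    using Suc.prems Bset_Ev[of "\<lambda>v. int v = j-1-l" "a+t" "j-1"] by (intro UN_I[of "(a+t, j-1)"]) auto
  then show ?case unfolding e using Suc by auto
qed

lemma Sig_events: "Sig T \<subseteq> events"
  unfolding Sig_def
  by (rule sets.sigma_sets_subset) (auto simp: Ev_def intro: measurable_sets[OF Bm])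

lemma prob_B: "prob {\<omega>\<in>space M. B n j \<omega> = c} = pmf p c"
proof -
  have "prob {\<omega>\<in>space M. B n j \<omega> = c} = measure (distr M (count_space UNIV) (B n j)) {c}"
    by (subst measure_distr[OF Bm]) (auto intro: arg_cong[where f="prob"])
  also have "\<dots> = pmf p c" by (simp add: Bd measure_pmf_single)
  finally show ?thesis .
qed

lemma indep_now:
  assumes D: "D \<in> Sig T"
  shows "prob ({\<omega>\<in>space M. B T j \<omega> = c} \<inter> D) = pmf p c * prob D"
proof -
  define I where "I = (\<lambda>b. if b then {(s,y). s < T} else {(T,j)})"
  have ind0: "indep_sets Ev UNIV"
    using IND unfolding indep_vars_def2 Ev_def by auto
  have ind1: "indep_sets Ev (\<Union>b\<in>UNIV. I b)"
    by (rule indep_sets_mono_index[OF _ ind0]) auto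
  have stab: "Int_stable (Ev i)" for i
    unfolding Ev_def Int_stable_def
    apply auto
    apply (rule_tac x="A \<inter> Aa" in exI)
    apply auto
    done
  have disj: "disjoint_family_on I UNIV"
    unfolding disjoint_family_on_def I_def by auto
  have ind2: "indep_sets (\<lambda>b. sigma_sets (space M) (\<Union>i\<in>I b. Ev i)) UNIV"
    by (rule indep_sets_collect_sigma[OF ind1 stab disj])
  define A where "A = (\<lambda>b. if b then D else {\<omega>\<in>space M. B T j \<omega> = c})"
  have A: "\<forall>b\<in>UNIV. A b \<in> sigma_sets (space M) (\<Union>i\<in>I b. Ev i)"
  proof
    fix b :: bool
    show "A b \<in> sigma_sets (space M) (\<Union>i\<in>I b. Ev i)"
    proof (cases b)
      case True then show ?thesis using D by (simp add: A_def I_def Sig_def)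
    next
      case False
      then show ?thesis unfolding A_def I_def
        using Bset_Ev[of "\<lambda>v. v = c" T j] by (auto intro!: sigma_sets.Basic)
    qed
  qed
  have "prob (\<Inter>b\<in>UNIV. A b) = (\<Prod>b\<in>UNIV. prob (A b))"
    by (rule indep_setsD[OF ind2 _ _ _ A]) auto
  moreover have "(\<Inter>b\<in>UNIV. A b) = {\<omega>\<in>space M. B T j \<omega> = c} \<inter> D"
    by (auto simp: A_def UNIV_bool)
  moreover have "(\<Prod>b\<in>UNIV. prob (A b)) = pmf p c * prob D"
    by (simp add: A_def UNIV_bool prob_B)
  ultimately show ?thesis by simp
qed

lemma Rs_prob:
  assumes pos: "\<And>j. j < i \<Longrightarrow> pmf p j > 0"
  shows "x \<le> i \<Longrightarrow> prob (Rs a l t (l + int x)) = Cg p x t"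
proof (induction t arbitrary: x)
  case 0
  then show ?case
  proof (cases x)
    case 0 then show ?thesis by (simp add: Rs_def Cg_0 prob_space)
  next
    case (Suc x')
    then show ?thesis using 0 pos by (simp add: Rs_def Cg_Suc_0)
  qed
next
  case (Suc t)
  show ?case
  proof (cases x)
    case 0 then show ?thesis by (simp add: Rs_def Cg_0 prob_space)
  next
    case (Suc x')
    let ?q = "pmf p x'"
    have xi: "x' < i" "x' \<le> i" using Suc Suc.prems by auto
    let ?Bc = "{\<omega>\<in>space M. B (a+t) (l + int x') \<omega> = x'}"
    have e: "Rs a l (Suc t) (l + int x) = Rs a l t (l + int x) \<union> (?Bc \<inter> (Rs a l t (l + int x') - Rs a l t (l + int x)))"
      using Suc by (auto simp: Rs_def intro: Rf_mono[where j = "l + int x'"] simp: add.assoc)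
    have xx: "l + int x = l + int x' + 1" using Suc by simp
    have sub: "Rs a l t (l + int x) \<subseteq> Rs a l t (l + int x')"
      unfolding xx Rs_def using Rf_mono[where j = "l + int x'"] by auto
    have inS: "Rs a l t j \<in> Sig (a+t)" for j by (rule Rs_in) simp
    have ev: "Rs a l t j \<in> events" for j using inS Sig_events by auto
    have Sa: "sigma_algebra (space M) (Sig (a+t))" by (rule Sig_alg)
    have Dm: "Rs a l t (l + int x') - Rs a l t (l + int x) \<in> Sig (a+t)"
      proof -
      interpret S: sigma_algebra "space M" "Sig (a+t)" by (rule Sa)
      show ?thesis using inS by blast
    qed
    have Bcev: "?Bc \<in> events" using measurable_sets[OF Bm, of "{x'}"] by (simp add: vimage_def Int_def conj_commute)
    have "prob (Rs a l (Suc t) (l + int x)) = prob (Rs a l t (l + int x)) + prob (?Bc \<inter> (Rs a l t (l + int x') - Rs a l t (l + int x)))"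
      unfolding e by (rule finite_measure_Union) (use ev Bcev in auto)
    also have "prob (?Bc \<inter> (Rs a l t (l + int x') - Rs a l t (l + int x))) = ?q * (prob (Rs a l t (l + int x')) - prob (Rs a l t (l + int x)))"
      by (subst indep_now[OF Dm]) (simp add: finite_measure_Diff[OF ev ev sub])
    finally show ?thesis
      using Suc.IH[of x] Suc.IH[of x'] Suc.prems xi Cg_rec[of p x' t] pos[OF xi(1)] Suc
      by (simp add: algebra_simps)
  qed
qed


lemma conv_main:
  assumes pos: "\<And>j. j < i \<Longrightarrow> pmf p j > 0"
  shows "weak_conv_m (\<lambda>n. distr M borel (\<lambda>\<omega>. real (age A0 (\<lambda>t x. B t x \<omega>) n (k + int i) k)))
                     (distr (measure_pmf (sum_geom_pmf p i)) borel real)"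
  unfolding weak_conv_m_def weak_conv_def
proof (intro allI impI)
  fix y :: real
  define f where "f = (\<lambda>n \<omega>. real (age A0 (\<lambda>t x. B t x \<omega>) n (k + int i) k))"
  have fm: "f n \<in> borel_measurable M" for n
    unfolding f_def by (rule measurable_compose[OF age_meas[OF Bm]]) simp
  have rm: "(real :: nat \<Rightarrow> real) \<in> borel_measurable (measure_pmf (sum_geom_pmf p i))"
    by simp
  have cdfn: "cdf (distr M borel (f n)) y = prob (f n -` {..y} \<inter> space M)" for n
    unfolding cdf_def by (rule measure_distr[OF fm]) simp
  have cdfl: "cdf (distr (measure_pmf (sum_geom_pmf p i)) borel real) y
      = measure_pmf.prob (sum_geom_pmf p i) {a. real a \<le> y}"
    unfolding cdf_def by (subst measure_distr[OF rm]) (auto intro: arg_cong[where f="measure _"])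
  show "(\<lambda>n. cdf (distr M borel (f n)) y) \<longlonglongrightarrow> cdf (distr (measure_pmf (sum_geom_pmf p i)) borel real) y"
  proof (cases "y < 0")
    case True
    have "f n -` {..y} \<inter> space M = {}" for n using True by (auto simp: f_def)
    moreover have "{a::nat. real a \<le> y} = {}" using True by auto
    ultimately show ?thesis unfolding cdfn cdfl by simp
  next
    case False
    define m where "m = nat \<lfloor>y\<rfloor>"
    have ry: "real a \<le> y \<longleftrightarrow> a \<le> m" for a :: nat
      unfolding m_def using False by linarith
    have "{a::nat. real a \<le> y} = {..m}" using ry by auto
    then have L: "cdf (distr (measure_pmf (sum_geom_pmf p i)) borel real) y = Cg p i m"
      unfolding cdfl by (simp add: Cg_prob)
    have "cdf (distr M borel (f n)) y = Cg p i m" if "n \<ge> m + 1" for n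
    proof -
      define a where "a = n - m"
      have a1: "1 \<le> a" and na: "n = a + m" using that by (auto simp: a_def)
      have "f n -` {..y} \<inter> space M = Rs a k m (k + int i)"
        unfolding Rs_def f_def na using ry age_Rf[OF a1] by auto
      then show ?thesis unfolding cdfn using Rs_prob[OF pos, where x=i and a=a and l=k and t=m] by simp
    qed
    then have "eventually (\<lambda>n. cdf (distr M borel (f n)) y = Cg p i m) sequentially"
      unfolding eventually_sequentially by blast
    then show ?thesis unfolding L by (rule tendsto_eventually)
  qed
qed

end




lemma deriv_aux:
  fixes z :: real assumes nz: "1 - z \<noteq> 0"
  shows "((\<lambda>w. w / (1 - w)^2) has_field_derivative ((1 + z) / (1 - z)^3)) (at z)"
proof -
  have "((\<lambda>w. w / (1 - w)^2) has_field_derivative ((1 * (1-z)^2 - z * (of_nat 2 * ((0 - 1) * (1-z) ^ (2 - Suc 0)))) / ((1-z)^2 * (1-z)^2))) (at z)"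
    apply (rule DERIV_divide)
      apply (rule DERIV_ident)
     apply (rule DERIV_power)
     apply (rule DERIV_diff)
      apply (rule DERIV_const)
     apply (rule DERIV_ident)
    using nz by simp
  moreover have "(1 * (1-z)^2 - z * (of_nat 2 * ((0 - 1) * (1-z) ^ (2 - Suc 0)))) / ((1-z)^2 * (1-z)^2) = (1 + z) / (1 - z)^3"
  proof -
    have a: "1 * (1-z)^2 - z * (of_nat 2 * ((0 - 1) * (1-z) ^ (2 - Suc 0))) = (1-z)*(1+z)"
      by (simp add: power2_eq_square algebra_simps)
    have b: "(1-z)^2 * (1-z)^2 = (1-z)*(1-z)^3"
      by (simp add: power2_eq_square power3_eq_cube)
    show ?thesis unfolding a b using nz by simp
  qed
  ultimately show ?thesis by simp
qed

lemma sums_sq: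
  fixes z :: real
  assumes "\<bar>z\<bar> < 1"
  shows "(\<lambda>n. of_nat (Suc n) * of_nat (Suc n) * z ^ n) sums ((1 + z) / (1 - z)^3)"
proof -
  have s: "(\<lambda>n. of_nat n * w ^ n) sums (w / (1 - w)^2)" if "norm w < (1::real)" for w :: real
    using geometric_sums_times_n[OF that] by (simp add: mult.commute)
  have d: "((\<lambda>w. w / (1 - w)^2) has_field_derivative ((1 + z) / (1 - z)^3)) (at z)"
    using assms by (intro deriv_aux) auto
  have "(\<lambda>n. diffs (\<lambda>n. of_nat n) n * z ^ n) sums ((1 + z) / (1 - z)^3)"
    by (rule termdiffs_sums_strong[OF s d]) (use assms in auto)
  then show ?thesis by (simp add: diffs_def)
qed




lemma nn_integral_geom_sums:
  assumes q: "0 < q" "q \<le> 1" and s: "(\<lambda>n. (1-q)^n * q * f n) sums S" and f: "\<And>n. f n \<ge> 0"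
  shows "(\<integral>\<^sup>+g. ennreal (f g) \<partial>measure_pmf (geometric_pmf q)) = ennreal S"
proof -
  have "(\<integral>\<^sup>+g. ennreal (f g) \<partial>measure_pmf (geometric_pmf q)) =
      (\<integral>\<^sup>+g. ennreal (pmf (geometric_pmf q) g) * ennreal (f g) \<partial>count_space UNIV)"
    by (rule nn_integral_measure_pmf)
  also have "\<dots> = (\<integral>\<^sup>+g. ennreal ((1-q)^g * q * f g) \<partial>count_space UNIV)"
  proof (rule nn_integral_cong)
    fix g :: nat
    have "0 \<le> (1-q)^g * q" using q by simp
    then show "ennreal (pmf (geometric_pmf q) g) * ennreal (f g) = ennreal ((1-q)^g * q * f g)"
      using q by (simp only: pmf_geometric ennreal_mult[symmetric] f)
  qed
  also have "\<dots> = (\<Sum>n. ennreal ((1-q)^n * q * f n))"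
    by (rule nn_integral_count_space_nat)
  also have "\<dots> = ennreal S"
  proof (rule suminf_ennreal_eq[OF _ s])
    fix n show "0 \<le> (1-q)^n * q * f n" using q f by simp
  qed
  finally show ?thesis .
qed

lemma geom1_m1:
  assumes q: "0 < q" "q \<le> 1"
  shows "(\<integral>\<^sup>+g. ennreal (real g) \<partial>measure_pmf (geom1_pmf q)) = ennreal (1/q)"
proof -
  have "(\<lambda>n. (1-q)^n * q * real (Suc n)) sums (q * ((1 - q) / q^2) + 1)"
  proof -
    have a: "(\<lambda>n. q * ((1-q)^n * real n)) sums (q * ((1 - q) / (1 - (1-q))^2))"
      using geometric_sums_times_n[of "1-q"] q by (intro sums_mult) auto
    have b: "(\<lambda>n. q * (1-q)^n) sums (q * (1 / (1 - (1-q))))"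
      using geometric_sums[of "1-q"] q by (intro sums_mult) auto
    have "(\<lambda>n. q * ((1-q)^n * real n) + q * (1-q)^n) sums (q * ((1 - q) / (1 - (1-q))^2) + q * (1 / (1 - (1-q))))"
      by (rule sums_add[OF a b])
    then show ?thesis using q by (simp add: algebra_simps)
  qed
  moreover have "q * ((1 - q) / q^2) + 1 = 1/q" using q by (simp add: field_simps power2_eq_square)
  ultimately have s: "(\<lambda>n. (1-q)^n * q * real (Suc n)) sums (1/q)" by simp
  show ?thesis unfolding geom1_pmf_def using nn_integral_geom_sums[OF q s] by simp
qed




lemma geom1_m2:
  assumes q: "0 < q" "q \<le> 1"
  shows "(\<integral>\<^sup>+g. ennreal (real g ^ 2) \<partial>measure_pmf (geom1_pmf q)) = ennreal ((2-q)/q^2)"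
proof -
  have "(\<lambda>n. q * (of_nat (Suc n) * of_nat (Suc n) * (1-q) ^ n)) sums (q * ((1 + (1-q)) / (1 - (1-q))^3))"
    using sums_sq[of "1-q"] q by (intro sums_mult) auto
  moreover have "q * ((1 + (1-q)) / (1 - (1-q))^3) = (2-q)/q^2" using q
    by (simp add: field_simps power2_eq_square power3_eq_cube)
  ultimately have s: "(\<lambda>n. (1-q)^n * q * real (Suc n) ^ 2) sums ((2-q)/q^2)"
    by (simp add: algebra_simps power2_eq_square)
  show ?thesis unfolding geom1_pmf_def using nn_integral_geom_sums[OF q s] by simp
qed

lemma nn_lin:
  fixes P :: "nat pmf"
  assumes "u \<ge> 0" "v \<ge> 0" "w \<ge> 0" "\<And>a. f a \<ge> 0" "\<And>a. g a \<ge> 0" "F \<ge> 0" "G \<ge> 0"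
    and F: "(\<integral>\<^sup>+a. ennreal (f a) \<partial>measure_pmf P) = ennreal F"
    and G: "(\<integral>\<^sup>+a. ennreal (g a) \<partial>measure_pmf P) = ennreal G"
  shows "(\<integral>\<^sup>+a. ennreal (u * f a + v * g a + w) \<partial>measure_pmf P) = ennreal (u * F + v * G + w)"
proof -
  have "(\<integral>\<^sup>+a. ennreal (u * f a + v * g a + w) \<partial>measure_pmf P) =
     (\<integral>\<^sup>+a. ennreal u * ennreal (f a) + ennreal v * ennreal (g a) + ennreal w \<partial>measure_pmf P)"
  proof (rule nn_integral_cong)
    fix a
    have h1: "0 \<le> u * f a" "0 \<le> v * g a" using assms by auto
    have "ennreal (u * f a + v * g a + w) = ennreal (u * f a) + ennreal (v * g a) + ennreal w"
      using h1 assms by (simp add: ennreal_plus)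
    also have "\<dots> = ennreal u * ennreal (f a) + ennreal v * ennreal (g a) + ennreal w"
      using assms by (simp add: ennreal_mult)
    finally show "ennreal (u * f a + v * g a + w) = ennreal u * ennreal (f a) + ennreal v * ennreal (g a) + ennreal w" .
  qed
  also have "\<dots> = ennreal u * (\<integral>\<^sup>+a. ennreal (f a) \<partial>measure_pmf P) + ennreal v * (\<integral>\<^sup>+a. ennreal (g a) \<partial>measure_pmf P) + ennreal w"
    by (simp add: nn_integral_add nn_integral_cmult measure_pmf.emeasure_space_1)
  also have "\<dots> = ennreal (u * F + v * G + w)"
  proof -
    have h1: "0 \<le> u * F" "0 \<le> v * G" using assms by auto
    have "ennreal (u * F + v * G + w) = ennreal (u * F) + ennreal (v * G) + ennreal w"
      using h1 assms by (simp add: ennreal_plus)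
    also have "\<dots> = ennreal u * ennreal F + ennreal v * ennreal G + ennreal w"
      using assms by (simp add: ennreal_mult)
    finally show ?thesis using F G by simp
  qed
  finally show ?thesis .
qed




lemma sum_geom_moments:
  assumes pos: "\<And>j. j < i \<Longrightarrow> pmf p j > 0"
  shows "x \<le> i \<Longrightarrow> (\<integral>\<^sup>+a. ennreal (real a) \<partial>measure_pmf (sum_geom_pmf p x)) = ennreal (\<Sum>j<x. 1 / pmf p j)
     \<and> (\<integral>\<^sup>+a. ennreal (real a ^ 2) \<partial>measure_pmf (sum_geom_pmf p x)) =
         ennreal ((\<Sum>j<x. (1 - pmf p j) / (pmf p j)^2) + (\<Sum>j<x. 1 / pmf p j)^2)"
proof (induction x)
  case 0
  then show ?case by simp
next
  case (Suc x)
  let ?q = "pmf p x"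
  let ?m = "\<Sum>j<x. 1 / pmf p j" and ?V = "\<Sum>j<x. (1 - pmf p j) / (pmf p j)^2"
  have q: "0 < ?q" "?q \<le> 1" using pos Suc.prems by (auto simp: pmf_le_1)
  from Suc.IH Suc.prems have IH1: "(\<integral>\<^sup>+a. ennreal (real a) \<partial>measure_pmf (sum_geom_pmf p x)) = ennreal ?m"
    and IH2: "(\<integral>\<^sup>+a. ennreal (real a ^ 2) \<partial>measure_pmf (sum_geom_pmf p x)) = ennreal (?V + ?m^2)" by auto
  have m0: "?m \<ge> 0" by (intro sum_nonneg) auto
  have V0: "?V \<ge> 0" using pmf_le_1 by (intro sum_nonneg divide_nonneg_nonneg) auto
  note g1 = geom1_m1[OF q] and g2 = geom1_m2[OF q]
  have q2: "(2 - ?q) / ?q^2 \<ge> 0" using q by auto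
  have in1: "(\<integral>\<^sup>+g. ennreal (1 * real g + 0 * real g + real a) \<partial>measure_pmf (geom1_pmf ?q)) = ennreal (1 * (1/?q) + 0 * (1/?q) + real a)" for a
    by (rule nn_lin[OF _ _ _ _ _ _ _ g1 g1]) (use q in auto)
  have E1: "(\<integral>\<^sup>+a. ennreal (real a) \<partial>measure_pmf (sum_geom_pmf p (Suc x))) = ennreal (?m + 1/?q)"
  proof -
    have "(\<integral>\<^sup>+a. ennreal (real a) \<partial>measure_pmf (sum_geom_pmf p (Suc x))) =
        (\<integral>\<^sup>+a. (\<integral>\<^sup>+g. ennreal (real (a + g)) \<partial>measure_pmf (geom1_pmf ?q)) \<partial>measure_pmf (sum_geom_pmf p x))"
      by (simp only: sum_geom_pmf.simps nn_integral_bind_pmf nn_integral_map_pmf)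
    also have "\<dots> = (\<integral>\<^sup>+a. ennreal (1 * real a + 0 * real a + 1/?q) \<partial>measure_pmf (sum_geom_pmf p x))"
    proof (rule nn_integral_cong)
      fix a
      have "(\<lambda>g. ennreal (real (a + g))) = (\<lambda>g. ennreal (1 * real g + 0 * real g + real a))" by auto
      then show "(\<integral>\<^sup>+g. ennreal (real (a + g)) \<partial>measure_pmf (geom1_pmf ?q)) = ennreal (1 * real a + 0 * real a + 1/?q)"
        using in1[of a] by (simp only:) (simp add: add.commute)
    qed
    also have "\<dots> = ennreal (1 * ?m + 0 * ?m + 1/?q)"
      by (rule nn_lin[OF _ _ _ _ _ _ _ IH1 IH1]) (use q m0 in auto)
    finally show ?thesis by simp
  qed
  have in2: "(\<integral>\<^sup>+g. ennreal (real (a + g) ^ 2) \<partial>measure_pmf (geom1_pmf ?q)) =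
     ennreal ((2 * real a) * (1/?q) + 1 * ((2 - ?q) / ?q^2) + real a ^ 2)" for a
  proof -
    have "(\<integral>\<^sup>+g. ennreal (real (a + g) ^ 2) \<partial>measure_pmf (geom1_pmf ?q)) =
        (\<integral>\<^sup>+g. ennreal ((2 * real a) * real g + 1 * real g ^ 2 + real a ^ 2) \<partial>measure_pmf (geom1_pmf ?q))"
      by (intro nn_integral_cong) (simp add: power2_eq_square algebra_simps)
    also have "\<dots> = ennreal ((2 * real a) * (1/?q) + 1 * ((2 - ?q) / ?q^2) + real a ^ 2)"
      by (rule nn_lin[OF _ _ _ _ _ _ _ g1 g2]) (use q in auto)
    finally show ?thesis .
  qed
  have E2: "(\<integral>\<^sup>+a. ennreal (real a ^ 2) \<partial>measure_pmf (sum_geom_pmf p (Suc x))) =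
      ennreal ((?V + ?m^2) + (2/?q) * ?m + (2 - ?q) / ?q^2)"
  proof -
    have "(\<integral>\<^sup>+a. ennreal (real a ^ 2) \<partial>measure_pmf (sum_geom_pmf p (Suc x))) =
        (\<integral>\<^sup>+a. (\<integral>\<^sup>+g. ennreal (real (a + g) ^ 2) \<partial>measure_pmf (geom1_pmf ?q)) \<partial>measure_pmf (sum_geom_pmf p x))"
      by (simp only: sum_geom_pmf.simps nn_integral_bind_pmf nn_integral_map_pmf)
    also have "\<dots> = (\<integral>\<^sup>+a. ennreal (1 * real a ^ 2 + (2/?q) * real a + (2 - ?q) / ?q^2) \<partial>measure_pmf (sum_geom_pmf p x))"
    proof (rule nn_integral_cong)
      fix a
      have "(2 * real a) * (1/?q) + 1 * ((2 - ?q) / ?q^2) + real a ^ 2 = 1 * real a ^ 2 + (2/?q) * real a + (2 - ?q) / ?q^2"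
        by (simp add: algebra_simps)
      then show "(\<integral>\<^sup>+g. ennreal (real (a + g) ^ 2) \<partial>measure_pmf (geom1_pmf ?q)) = ennreal (1 * real a ^ 2 + (2/?q) * real a + (2 - ?q) / ?q^2)"
        using in2[of a] by (simp only:)
    qed
    also have "\<dots> = ennreal (1 * (?V + ?m^2) + (2/?q) * ?m + (2 - ?q) / ?q^2)"
      by (rule nn_lin[OF _ _ _ _ _ _ _ IH2 IH1]) (use q m0 V0 in auto)
    finally show ?thesis by simp
  qed
  have alg: "(?V + ?m^2) + (2/?q) * ?m + (2 - ?q) / ?q^2 = (?V + (1 - ?q)/?q^2) + (?m + 1/?q)^2"
    using q by (simp add: field_simps power2_eq_square)
  show ?case
  proof
    show "(\<integral>\<^sup>+a. ennreal (real a) \<partial>measure_pmf (sum_geom_pmf p (Suc x))) = ennreal (\<Sum>j<Suc x. 1 / pmf p j)"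
      unfolding sum.lessThan_Suc by (rule E1)
    have hh: "(\<Sum>j<Suc x. (1 - pmf p j) / (pmf p j)^2) + (\<Sum>j<Suc x. 1 / pmf p j)^2 = (?V + ?m^2) + (2/?q) * ?m + (2 - ?q) / ?q^2"
      unfolding sum.lessThan_Suc using alg by linarith
    then show "(\<integral>\<^sup>+a. ennreal (real a ^ 2) \<partial>measure_pmf (sum_geom_pmf p (Suc x))) =
         ennreal ((\<Sum>j<Suc x. (1 - pmf p j) / (pmf p j)^2) + (\<Sum>j<Suc x. 1 / pmf p j)^2)"
      by (simp only: E2 hh)
  qed
qed

lemma sum_geom_EV:
  assumes pos: "\<And>j. j < i \<Longrightarrow> pmf p j > 0"
  shows "measure_pmf.expectation (sum_geom_pmf p i) real = (\<Sum>j<i. 1 / pmf p j)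
      \<and> measure_pmf.variance (sum_geom_pmf p i) real = (\<Sum>j<i. (1 - pmf p j) / (pmf p j)^2)"
proof -
  let ?m = "\<Sum>j<i. 1 / pmf p j" and ?V = "\<Sum>j<i. (1 - pmf p j) / (pmf p j)^2"
  note mo = sum_geom_moments[OF pos order_refl]
  have m0: "?m \<ge> 0" by (intro sum_nonneg) auto
  have V0: "?V \<ge> 0" using pmf_le_1 by (intro sum_nonneg divide_nonneg_nonneg) auto
  have i1: "integrable (measure_pmf (sum_geom_pmf p i)) (\<lambda>a. real a)"
    by (rule integrableI_nn_integral_finite[OF _ _ conjunct1[OF mo]]) auto
  have i2: "integrable (measure_pmf (sum_geom_pmf p i)) (\<lambda>a. (real a)^2)"
    by (rule integrableI_nn_integral_finite[OF _ _ conjunct2[OF mo]]) auto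
  have e1: "measure_pmf.expectation (sum_geom_pmf p i) real = ?m"
    using conjunct1[OF mo] m0 by (subst integral_eq_nn_integral) auto
  have e2: "measure_pmf.expectation (sum_geom_pmf p i) (\<lambda>a. (real a)^2) = ?V + ?m^2"
  proof -
    have "measure_pmf.expectation (sum_geom_pmf p i) (\<lambda>a. (real a)^2) = enn2real (\<integral>\<^sup>+a. ennreal ((real a)^2) \<partial>measure_pmf (sum_geom_pmf p i))"
      by (rule integral_eq_nn_integral) auto
    also have "\<dots> = ?V + ?m^2" apply (subst conjunct2[OF mo], blast) by (rule enn2real_ennreal) (use m0 V0 in simp)
    finally show ?thesis .
  qed
  have "measure_pmf.variance (sum_geom_pmf p i) real = ?V"
    by (subst measure_pmf.variance_eq[OF i1 i2]) (simp add: e1 e2)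
  with e1 show ?thesis by simp
qed



theorem mainTheorem1:
  fixes M :: "'a measure" and p :: "nat pmf" and B :: "nat \<Rightarrow> int \<Rightarrow> 'a \<Rightarrow> nat"
    and A0 :: "int \<Rightarrow> int \<Rightarrow> nat" and i :: nat and k :: int
  assumes "prob_space M"
    and "\<And>n j. B n j \<in> measurable M (count_space UNIV)"
    and "prob_space.indep_vars M (\<lambda>_. count_space UNIV) (\<lambda>(n, j). B n j) UNIV"
    and "\<And>n j. distr M (count_space UNIV) (B n j) = measure_pmf p"
    and "i \<ge> 1"
    and "\<And>j. j < i \<Longrightarrow> pmf p j > 0"
  shows "weak_conv_m (\<lambda>n. distr M borel (\<lambda>\<omega>. real (age A0 (\<lambda>t x. B t x \<omega>) n (k + int i) k)))
                     (distr (measure_pmf (sum_geom_pmf p i)) borel real)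
      \<and> measure_pmf.expectation (sum_geom_pmf p i) real = (\<Sum>j<i. 1 / pmf p j)
      \<and> measure_pmf.variance (sum_geom_pmf p i) real = (\<Sum>j<i. (1 - pmf p j) / (pmf p j)^2)"
  using conv_main[OF assms(1-4) assms(6)] sum_geom_EV[OF assms(6)] by blast

end
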